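(* Let $K\ge 1$ and $T\ge 2$ be integers and let $a_1,\dots,a_{T-1}$ be binary sequences of period $K$. Define the binary sequences $s=I(0_K,a_1,\dots,a_{T-1})$ and $s'=I(1_K,a_1,\dots,a_{T-1})$ of period $KT$. For $0\le \tau<KT$ write $\tau=\tau_1T+\tau_2$ with $0\le\tau_2\le T-1$. Then $$R_{s'}(\tau)=\begin{cases}R_s(\tau)&\text{if }\tau_2=0,\\ R_s(\tau)+2d(a_{\tau_2})+2d(a_{T-\tau_2})&\text{if }\tau_2\neq 0,\end{cases}$$ $$R_{s,s'}(\tau)=\begin{cases}KT-2K&\text{if }\tau=0,\\ R_s(\tau)-2K&\text{if }\tau_2=0,\ \tau\neq 0,\\ R_s(\tau)+2d(a_{T-\tau_2})&\text{otherwise},\end{cases}\qquad R_{s',s}(\tau)=\begin{cases}KT-2K&\text{if }\tau=0,\\ R_s(\tau)-2K&\text{if }\tau_2=0,\ \tau\neq 0,\\ R_s(\tau)+2d(a_{\tau_2})&\text{otherwise}.\end{cases}$$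
   Context: A binary sequence of period $n$ is a map $\mathbb{Z}\to\{0,1\}$ with period $n$ (indices are taken modulo $n$). For binary sequences $a,b$ of period $n$, the periodic correlation is $R_{a,b}(\tau)=\sum_{t=0}^{n-1}(-1)^{a(t)+b(t+\tau)}$ (with $t+\tau$ taken mod $n$), and $R_a(\tau)=R_{a,a}(\tau)$ is the autocorrelation. For binary sequences $b_0,\dots,b_{T-1}$ of period $K$, the interleaved sequence $I(b_0,\dots,b_{T-1})$ is the binary sequence $v$ of period $KT$ defined by $v(iT+j)=b_j(i)$ for $0\le i\le K-1$, $0\le j\le T-1$ (i.e. the $j$-th column of the $K\times T$ array whose rows are consecutive blocks of $T$ terms of $v$ is $b_j$). $0_K$ and $1_K$ denote the all-zero and all-one sequences of period $K$. For a binary sequence $a$ of period $K$, its balance difference is $d(a)=2|\{0\le t\le K-1: a(t)=1\}|-K$. *)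

theory Defs
  imports Main
begin

text \<open>A binary sequence of period n is represented by a function nat => bool
  (True = 1, False = 0); only its values at 0..n-1 matter, since every index is
  reduced modulo n.\<close>

definition corr :: "nat \<Rightarrow> (nat \<Rightarrow> bool) \<Rightarrow> (nat \<Rightarrow> bool) \<Rightarrow> nat \<Rightarrow> int" where
  "corr n a b \<tau> = (\<Sum>t<n. (-1::int) ^ (of_bool (a (t mod n)) + of_bool (b ((t + \<tau>) mod n))))"

definition acorr :: "nat \<Rightarrow> (nat \<Rightarrow> bool) \<Rightarrow> nat \<Rightarrow> int" where
  "acorr n a \<tau> = corr n a a \<tau>"

text \<open>Interleaved sequence I(b_0,...,b_{T-1}) of period K*T: v(iT+j) = b_j(i).\<close>
definition interleave :: "nat \<Rightarrow> nat \<Rightarrow> (nat \<Rightarrow> nat \<Rightarrow> bool) \<Rightarrow> nat \<Rightarrow> bool" where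
  "interleave K T b k = b ((k mod (K * T)) mod T) (((k mod (K * T)) div T) mod K)"

definition baldiff :: "nat \<Rightarrow> (nat \<Rightarrow> bool) \<Rightarrow> int" where
  "baldiff K a = 2 * int (card {t. t < K \<and> a t}) - int K"

end

theory Submission
  imports Defs
begin


lemma colsum:
  fixes f :: "nat \<Rightarrow> int"
  assumes "c < T"
  shows "(\<Sum>t<K*T. if t mod T = c then f t else 0) = (\<Sum>i<K. f (i*T + c))"
proof (induction K)
  case 0 then show ?case by simp
next
  case (Suc K)
  let ?g = "\<lambda>t. if t mod T = c then f t else 0"
  have u: "{..<Suc K * T} = {..<K*T} \<union> {0 + K*T..<T + K*T}" by auto
  have "(\<Sum>t<Suc K*T. ?g t) = (\<Sum>t<K*T. ?g t) + (\<Sum>t\<in>{0 + K*T..<T + K*T}. ?g t)"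
    unfolding u by (rule sum.union_disjoint) auto
  also have "(\<Sum>t\<in>{0 + K*T..<T + K*T}. ?g t) = (\<Sum>j\<in>{0..<T}. ?g (j + K*T))"
    by (rule sum.shift_bounds_nat_ivl)
  also have "\<dots> = (\<Sum>j\<in>{0..<T}. if j = c then f (K*T + c) else 0)"
    by (rule sum.cong) (auto simp: add.commute)
  also have "\<dots> = f (K*T+c)" using assms by (simp add: sum.delta')
  finally show ?case using Suc by (simp add: mult.commute)
qed

lemma rot1:
  fixes g :: "nat \<Rightarrow> int"
  assumes "0 < N"
  shows "(\<Sum>t<N. g ((t+1) mod N)) = (\<Sum>t<N. g t)"
proof -
  obtain m where m: "N = Suc m" using assms by (cases N) auto
  have "(\<Sum>t<N. g ((t+1) mod N)) = (\<Sum>t<m. g ((t+1) mod N)) + g 0"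
    by (simp add: m)
  also have "(\<Sum>t<m. g ((t+1) mod N)) = (\<Sum>t<m. g (Suc t))"
    by (rule sum.cong) (auto simp: m)
  also have "\<dots> + g 0 = (\<Sum>t<N. g t)"
    unfolding m sum.lessThan_Suc_shift by simp
  finally show ?thesis .
qed

lemma rot:
  fixes g :: "nat \<Rightarrow> int"
  assumes "0 < N"
  shows "(\<Sum>t<N. g ((t+\<tau>) mod N)) = (\<Sum>t<N. g t)"
proof (induction \<tau> arbitrary: g)
  case 0 then show ?case by simp
next
  case (Suc \<tau>)
  have "(\<Sum>t<N. g ((t+Suc \<tau>) mod N)) = (\<Sum>t<N. (\<lambda>u. g ((u + \<tau>) mod N)) ((t+1) mod N))"
    by (rule sum.cong) (auto simp: mod_add_left_eq)
  also have "\<dots> = (\<Sum>t<N. g ((t + \<tau>) mod N))" by (rule rot1[OF assms])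
  finally show ?case using Suc by simp
qed

lemma sgsum:
  "(\<Sum>i<K. (-1::int) ^ of_bool (b i)) = - (2 * int (card {t. t < K \<and> b t}) - int K)"
proof -
  have "(\<Sum>i<K. (-1::int) ^ of_bool (b i)) = (\<Sum>i<K. 1 - 2 * of_bool (b i))"
    by (rule sum.cong) auto
  also have "\<dots> = int K - 2 * int (card ({..<K} \<inter> {i. b i}))"
    by (simp add: sum_subtractf sum_distrib_left[symmetric])
  also have "{..<K} \<inter> {i. b i} = {t. t < K \<and> b t}" by auto
  finally show ?thesis by simp
qed


lemma E0: fixes a b T :: nat assumes "a < T" "b < T" shows "((a+b) mod T = 0) = (a = (T - b) mod T)"
proof (cases "a + b < T")
  case True then show ?thesis using assms by (cases "b = 0") auto
next
  case False
  then have "(a+b) mod T = a + b - T" using assms by (simp add: mod_if le_mod_geq)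
  then show ?thesis using assms False by auto
qed
lemma E0': fixes a b T :: nat assumes "a < T" "b < T" shows "((a+b) mod T = b) = (a = 0)"
proof (cases "a + b < T")
  case True then show ?thesis using assms by auto
next
  case False
  then have "(a+b) mod T = a + b - T" using assms by (simp add: mod_if le_mod_geq)
  then show ?thesis using assms False by auto
qed
lemma E1: fixes t \<tau> T :: nat assumes "0 < T" shows "((t+\<tau>) mod T = 0) = (t mod T = (T - \<tau> mod T) mod T)"
  using E0[of "t mod T" T "\<tau> mod T"] assms by (simp add: mod_add_eq)
lemma E2: fixes t \<tau> T :: nat assumes "0 < T" shows "((t+\<tau>) mod T = \<tau> mod T) = (t mod T = 0)"
  using E0'[of "t mod T" T "\<tau> mod T"] assms by (simp add: mod_add_eq)

lemma corr_alt: "0 < n \<Longrightarrow> corr n a b \<tau> = (\<Sum>t<n. (-1::int) ^ of_bool (a t) * (-1) ^ of_bool (b ((t+\<tau>) mod n)))"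
  unfolding corr_def by (rule sum.cong) (auto simp: power_add)

theorem theorem1:
  fixes K T :: nat and a :: "nat \<Rightarrow> nat \<Rightarrow> bool" and \<tau> :: nat
  assumes "K \<ge> 1" and "T \<ge> 2" and "\<tau> < K * T"
  defines "s \<equiv> interleave K T (\<lambda>j. if j = 0 then (\<lambda>_. False) else a j)"
    and "s' \<equiv> interleave K T (\<lambda>j. if j = 0 then (\<lambda>_. True) else a j)"
    and "\<tau>2 \<equiv> \<tau> mod T"
  shows "acorr (K * T) s' \<tau> =
           (if \<tau>2 = 0 then acorr (K * T) s \<tau>
            else acorr (K * T) s \<tau> + 2 * baldiff K (a \<tau>2) + 2 * baldiff K (a (T - \<tau>2))) \<and>
         corr (K * T) s s' \<tau> =
           (if \<tau> = 0 then int (K * T) - 2 * int K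
            else if \<tau>2 = 0 then acorr (K * T) s \<tau> - 2 * int K
            else acorr (K * T) s \<tau> + 2 * baldiff K (a (T - \<tau>2))) \<and>
         corr (K * T) s' s \<tau> =
           (if \<tau> = 0 then int (K * T) - 2 * int K
            else if \<tau>2 = 0 then acorr (K * T) s \<tau> - 2 * int K
            else acorr (K * T) s \<tau> + 2 * baldiff K (a \<tau>2))"
proof -
  define N where "N = K * T"
  define sg :: "bool \<Rightarrow> int" where "sg b = (-1::int) ^ of_bool b" for b
  have Tpos: "0 < T" using assms by simp
  have Npos: "0 < N" using assms by (simp add: N_def)
  have dvdN: "T dvd N" by (simp add: N_def)
  have colN: "x mod N mod T = x mod T" for x using dvdN by (simp add: mod_mod_cancel)
  have s0: "t mod T = 0 \<Longrightarrow> \<not> s t" for t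
    unfolding s_def interleave_def using colN[of t] by (simp add: N_def)
  have s'eq: "s' t = (t mod T = 0 \<or> s t)" for t
    unfolding s_def s'_def interleave_def using colN[of t] by (simp add: N_def)
  have scol: "s (i*T+c) = (c \<noteq> 0 \<and> a c i)" if "i < K" "c < T" for i c
  proof -
    have lt: "i*T + c < K*T"
    proof -
      have "i*T + c < i*T + T" using that by simp
      also have "\<dots> = Suc i * T" by simp
      also have "\<dots> \<le> K * T" using that by (intro mult_right_mono) auto
      finally show ?thesis .
    qed
    have "(i*T+c) div T = i" using that by simp
    then show ?thesis unfolding s_def interleave_def using lt that by simp
  qed
  have CS: "(\<Sum>t<N. if t mod T = c then sg (s t) else 0) = (if c = 0 then int K else - baldiff K (a c))"
    if "c < T" for c
  proof -
    have "(\<Sum>t<N. if t mod T = c then sg (s t) else 0) = (\<Sum>i<K. sg (s (i*T+c)))"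
      unfolding N_def by (rule colsum[OF that])
    also have "\<dots> = (\<Sum>i<K. sg (c \<noteq> 0 \<and> a c i))"
      by (rule sum.cong) (auto simp: scol that)
    also have "\<dots> = (if c = 0 then int K else - baldiff K (a c))"
      using sgsum[where K=K and b="a c"] by (auto simp: sg_def baldiff_def)
    finally show ?thesis .
  qed
  have umod: "(t + \<tau>) mod N mod T = (t+\<tau>) mod T" for t using colN .
  define A where "A = (\<Sum>t<N. if (t+\<tau>) mod T = 0 then sg (s t) else 0)"
  define B where "B = (\<Sum>t<N. if t mod T = 0 then sg (s ((t+\<tau>) mod N)) else 0)"
  have Aval: "A = (if \<tau>2 = 0 then int K else - baldiff K (a (T - \<tau>2)))"
  proof -
    have "A = (\<Sum>t<N. if t mod T = (T - \<tau>2) mod T then sg (s t) else 0)"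
      unfolding A_def \<tau>2_def using E1[OF Tpos] by simp
    also have "\<dots> = (if \<tau>2 = 0 then int K else - baldiff K (a (T - \<tau>2)))"
    proof (cases "\<tau>2 = 0")
      case True then show ?thesis using CS[of 0] Tpos by simp
    next
      case False
      have lt: "\<tau>2 < T" "0 < \<tau>2" using Tpos False by (auto simp: \<tau>2_def)
      then have "(T - \<tau>2) mod T = T - \<tau>2" by simp
      then show ?thesis using CS[of "T - \<tau>2"] lt False by simp
    qed
    finally show ?thesis .
  qed
  have Bval: "B = (if \<tau>2 = 0 then int K else - baldiff K (a \<tau>2))"
  proof -
    define G where "G u = (if u mod T = \<tau>2 then sg (s u) else 0)" for u
    have "B = (\<Sum>t<N. G ((t+\<tau>) mod N))"
      unfolding B_def G_def \<tau>2_def by (rule sum.cong) (auto simp: umod E2[OF Tpos])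
    also have "\<dots> = (\<Sum>t<N. G t)" by (rule rot[OF Npos])
    also have "\<dots> = (if \<tau>2 = 0 then int K else - baldiff K (a \<tau>2))"
      unfolding G_def using CS[of \<tau>2] Tpos by (simp add: \<tau>2_def)
    finally show ?thesis .
  qed
  have R0: "acorr N s 0 = int N"
    unfolding acorr_def corr_alt[OF Npos] by (simp add: power_add[symmetric])
  have C1: "corr N s s' \<tau> = acorr N s \<tau> - 2 * A"
  proof -
    have "corr N s s' \<tau> = (\<Sum>t<N. sg (s t) * sg (s ((t+\<tau>) mod N)) - 2 * (if (t+\<tau>) mod T = 0 then sg (s t) else 0))"
      unfolding corr_alt[OF Npos] sg_def
      by (rule sum.cong) (auto simp: s'eq umod s0)
    then show ?thesis unfolding A_def acorr_def corr_alt[OF Npos] sg_def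
      by (simp add: sum_subtractf sum_distrib_left)
  qed
  have C2: "corr N s' s \<tau> = acorr N s \<tau> - 2 * B"
  proof -
    have "corr N s' s \<tau> = (\<Sum>t<N. sg (s t) * sg (s ((t+\<tau>) mod N)) - 2 * (if t mod T = 0 then sg (s ((t+\<tau>) mod N)) else 0))"
      unfolding corr_alt[OF Npos] sg_def
      by (rule sum.cong) (auto simp: s'eq umod s0)
    then show ?thesis unfolding B_def acorr_def corr_alt[OF Npos] sg_def
      by (simp add: sum_subtractf sum_distrib_left)
  qed
  have C3: "acorr N s' \<tau> = acorr N s \<tau> - (if \<tau>2 = 0 then 0 else 2 * A + 2 * B)"
  proof (cases "\<tau>2 = 0")
    case True
    have "acorr N s' \<tau> = (\<Sum>t<N. sg (s t) * sg (s ((t+\<tau>) mod N)))"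
      unfolding acorr_def corr_alt[OF Npos] sg_def
      by (rule sum.cong) (use True in \<open>auto simp: s'eq umod s0 \<tau>2_def E2[OF Tpos, symmetric]\<close>)
    then show ?thesis using True unfolding acorr_def corr_alt[OF Npos] sg_def by simp
  next
    case False
    have "acorr N s' \<tau> = (\<Sum>t<N. sg (s t) * sg (s ((t+\<tau>) mod N))
        - 2 * (if (t+\<tau>) mod T = 0 then sg (s t) else 0)
        - 2 * (if t mod T = 0 then sg (s ((t+\<tau>) mod N)) else 0))"
      unfolding acorr_def corr_alt[OF Npos] sg_def
    proof (rule sum.cong)
      fix t assume "t \<in> {..<N}"
      have nb: "t mod T = 0 \<Longrightarrow> (t+\<tau>) mod T \<noteq> 0" using E2[OF Tpos, of t \<tau>] False
        by (auto simp: \<tau>2_def)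
      show "(- 1::int) ^ of_bool (s' t) * (- 1) ^ of_bool (s' ((t + \<tau>) mod N)) =
         (- 1) ^ of_bool (s t) * (- 1) ^ of_bool (s ((t + \<tau>) mod N)) -
         2 * (if (t + \<tau>) mod T = 0 then (- 1) ^ of_bool (s t) else 0) -
         2 * (if t mod T = 0 then (- 1) ^ of_bool (s ((t + \<tau>) mod N)) else 0)"
        using nb by (cases "t mod T = 0"; cases "(t+\<tau>) mod T = 0") (simp_all add: s'eq umod s0)
    qed simp
    then show ?thesis using False unfolding A_def B_def acorr_def corr_alt[OF Npos] sg_def
      by (simp add: sum_subtractf sum_distrib_left)
  qed
  have t0: "\<tau> = 0 \<Longrightarrow> \<tau>2 = 0" by (simp add: \<tau>2_def)
  show ?thesis
    using C1 C2 C3 Aval Bval R0 t0 unfolding N_def[symmetric]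
    by (auto simp: N_def)
qed

end
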